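(* There exist a set $A\subseteq\mathcal B$ and a functional $F\colon A\to\mathcal B$ such that $F$ is $A$-restricted polynomial-time computable but $F$ has no total polynomial-time computable extension $\tilde F\colon\mathcal B\to\mathcal B$.
   Context: $\Sigma=\{0,1\}$, $\mathcal B=(\Sigma^* )^{\Sigma^*}$ is the set of total string functions. An oracle Turing machine $M^?$ with oracle $\varphi\in\mathcal B$ replaces, upon entering its query state, the query-tape content $\mathbf b$ by $\varphi(\mathbf b)$ in one time step; $\operatorname{time}_{M^\varphi}(\mathbf a)$ is the number of steps on input $\mathbf a$. $M^?$ computes $F\colon A\to\mathcal B$ if $M^\varphi=F(\varphi)$ for all $\varphi\in A$. The size function is $|\varphi|(n)=\max\{|\varphi(\mathbf a)|:|\mathbf a|\le n\}$. Second-order polynomials are the smallest class of functions $\mathbb N^{\mathbb N}\times\mathbb N\to\mathbb N$ containing all $(l,n)\mapsto p(n)$ for polynomials $p$ with natural coefficients and closed under pointwise sum, pointwise product, and $P\mapsto P^+$, $P^+(l,n)=l(P(l,n))$. For $A\subseteq\mathcal B$, $F\colon A\to\mathcal B$ is $A$-restricted polynomial-time computable if some oracle Turing machine $M^?$ computes $F$ and there is a second-order polynomial $P$ with $\operatorname{time}_{M^\varphi}(\mathbf a)\le P(|\varphi|,|\mathbf a|)$ for all $\varphi\in A$ and $\mathbf a\in\Sigma^*$. A total functional is polynomial-time computable if this holds with $A=\mathcal B$. *)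

theory Defs
  imports Main "HOL-Computational_Algebra.Polynomial"
begin

type_synonym str = "bool list"
type_synonym strfun = "str \<Rightarrow> str"     (* elements of the Baire-like space B *)

definition size_fun :: "strfun \<Rightarrow> nat \<Rightarrow> nat" where
  "size_fun \<phi> n = Max {length (\<phi> a) | a. length a \<le> n}"

inductive_set sopoly :: "((nat \<Rightarrow> nat) \<Rightarrow> nat \<Rightarrow> nat) set" where
  const: "(\<lambda>l n. poly (p :: nat poly) n) \<in> sopoly"
| add: "P \<in> sopoly \<Longrightarrow> Q \<in> sopoly \<Longrightarrow> (\<lambda>l n. P l n + Q l n) \<in> sopoly"
| mult: "P \<in> sopoly \<Longrightarrow> Q \<in> sopoly \<Longrightarrow> (\<lambda>l n. P l n * Q l n) \<in> sopoly"
| app: "P \<in> sopoly \<Longrightarrow> (\<lambda>l n. l (P l n)) \<in> sopoly"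

text \<open>A multi-tape oracle Turing machine with k >= 2 one-way infinite tapes over the
alphabet {0,1,blank} (blank = None). Tape 0 is the input/otm_output tape, tape 1 the
query tape. States are 0..<Q with Q >= 4: state 0 = start, 1 = halt, 2 = query,
3 = answer.\<close>

datatype move = MoveL | MoveR | Stay

type_synonym tape = "(nat \<Rightarrow> bool option) \<times> nat"
type_synonym config = "nat \<times> tape list"

record otm =
  ntapes :: nat
  nstates :: nat
  delta :: "nat \<Rightarrow> bool option list \<Rightarrow> nat \<times> (bool option \<times> move) list"

definition wf_otm :: "otm \<Rightarrow> bool" where
  "wf_otm M \<longleftrightarrow> ntapes M \<ge> 2 \<and> nstates M \<ge> 4 \<and>
     (\<forall>q < nstates M. \<forall>syms. length syms = ntapes M \<longrightarrow>
        fst (delta M q syms) < nstates M \<and> length (snd (delta M q syms)) = ntapes M)"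

definition tape_of :: "str \<Rightarrow> nat \<Rightarrow> bool option" where
  "tape_of w = (\<lambda>i. if i < length w then Some (w ! i) else None)"

definition read_tape :: "(nat \<Rightarrow> bool option) \<Rightarrow> str" where
  "read_tape f = map (\<lambda>i. the (f i)) [0..<(LEAST i. f i = None)]"

fun move_head :: "move \<Rightarrow> nat \<Rightarrow> nat" where
  "move_head MoveL h = h - 1"
| "move_head MoveR h = h + 1"
| "move_head Stay h = h"

fun act :: "tape \<Rightarrow> bool option \<times> move \<Rightarrow> tape" where
  "act (f, h) (s, m) = (f(h := s), move_head m h)"

definition init_config :: "otm \<Rightarrow> str \<Rightarrow> config" where
  "init_config M a = (0, (tape_of a, 0) # replicate (ntapes M - 1) (\<lambda>_. None, 0))"

definition step :: "otm \<Rightarrow> strfun \<Rightarrow> config \<Rightarrow> config" where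
  "step M \<phi> c = (let (q, tps) = c in
     if q = 1 then c
     else if q = 2 then
       (3, tps[1 := (tape_of (\<phi> (read_tape (fst (tps ! 1)))), 0)])
     else
       (let (q', acts) = delta M q (map (\<lambda>(f, h). f h) tps)
        in (q', map2 act tps acts)))"

definition run :: "otm \<Rightarrow> strfun \<Rightarrow> str \<Rightarrow> nat \<Rightarrow> config" where
  "run M \<phi> a n = (step M \<phi> ^^ n) (init_config M a)"

definition halts :: "otm \<Rightarrow> strfun \<Rightarrow> str \<Rightarrow> bool" where
  "halts M \<phi> a \<longleftrightarrow> (\<exists>n. fst (run M \<phi> a n) = 1)"

definition time :: "otm \<Rightarrow> strfun \<Rightarrow> str \<Rightarrow> nat" where
  "time M \<phi> a = (LEAST n. fst (run M \<phi> a n) = 1)"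

definition otm_output :: "otm \<Rightarrow> strfun \<Rightarrow> str \<Rightarrow> str" where
  "otm_output M \<phi> a = read_tape (fst (snd (run M \<phi> a (time M \<phi> a)) ! 0))"

definition computes_on :: "otm \<Rightarrow> strfun set \<Rightarrow> (strfun \<Rightarrow> strfun) \<Rightarrow> bool" where
  "computes_on M A F \<longleftrightarrow> wf_otm M \<and>
     (\<forall>\<phi>\<in>A. \<forall>a. halts M \<phi> a \<and> otm_output M \<phi> a = F \<phi> a)"

definition restricted_polytime :: "strfun set \<Rightarrow> (strfun \<Rightarrow> strfun) \<Rightarrow> bool" where
  "restricted_polytime A F \<longleftrightarrow> (\<exists>M P. computes_on M A F \<and> P \<in> sopoly \<and>
     (\<forall>\<phi>\<in>A. \<forall>a. time M \<phi> a \<le> P (size_fun \<phi>) (length a)))"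

definition polytime :: "(strfun \<Rightarrow> strfun) \<Rightarrow> bool" where
  "polytime F \<longleftrightarrow> restricted_polytime UNIV F"

end

theory Submission
  imports Defs "HOL-Real_Asymp.Real_Asymp"
begin

lemma finite_len: "finite {a::bool list. length a \<le> k}"
  using finite_lists_length_le[of "UNIV::bool set" k] by simp

lemma read_tape_tape_of[simp]: "read_tape (tape_of w) = w"
proof -
  have L: "(LEAST i. tape_of w i = None) = length w"
    by (rule Least_equality) (auto simp: tape_of_def split: if_splits)
  show ?thesis unfolding read_tape_def L
    by (rule nth_equalityI) (auto simp: tape_of_def)
qed

lemma read_tape_empty[simp]: "read_tape (\<lambda>_. None) = []"
  unfolding read_tape_def by simp

lemma run_Suc: "run M \<phi> a (Suc k) = step M \<phi> (run M \<phi> a k)"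
  unfolding run_def by simp

lemma step_halted: "fst c = 1 \<Longrightarrow> step M \<phi> c = c"
  by (cases c) (simp add: step_def)

lemma run_halted: "fst (run M \<phi> a k) = 1 \<Longrightarrow> run M \<phi> a (k + j) = run M \<phi> a k"
  by (induction j) (auto simp: run_Suc step_halted)

lemma step_cong:
  assumes "fst c = 2 \<longrightarrow> \<phi> (read_tape (fst (snd c ! 1))) = \<psi> (read_tape (fst (snd c ! 1)))"
  shows "step M \<phi> c = step M \<psi> c"
  using assms by (cases c) (auto simp: step_def)

lemma run_agree:
  assumes "\<forall>i<k. fst (run M \<psi> a i) = 2 \<longrightarrow>
     \<phi> (read_tape (fst (snd (run M \<psi> a i) ! 1))) = \<psi> (read_tape (fst (snd (run M \<psi> a i) ! 1)))"
  shows "run M \<phi> a k = run M \<psi> a k"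
  using assms
proof (induction k)
  case 0
  then show ?case by (simp add: run_def)
next
  case (Suc k)
  then have e: "run M \<phi> a k = run M \<psi> a k" by auto
  show ?case unfolding run_Suc e
    by (rule step_cong) (use Suc.prems in auto)
qed

section \<open>Second-order polynomial bounds\<close>

lemma sopoly_mono:
  "P \<in> sopoly \<Longrightarrow> (\<forall>k. l k \<le> l' k) \<Longrightarrow> mono l' \<Longrightarrow> P l n \<le> P l' n"
proof (induction P arbitrary: n rule: sopoly.induct)
  case (const p)
  then show ?case by simp
next
  case (add P Q)
  then show ?case by (simp add: add_mono)
next
  case (mult P Q)
  then show ?case by (simp add: mult_mono)
next
  case (app P)
  have "l (P l n) \<le> l' (P l n)" using app.prems by auto
  also have "\<dots> \<le> l' (P l' n)" using app.IH[of n] app.prems by (simp add: monoD)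
  finally show ?case .
qed

lemma poly_nat_bound:
  fixes p :: "nat poly"
  assumes "1 \<le> X" "x \<le> X"
  shows "poly p x \<le> (\<Sum>i\<le>degree p. coeff p i) * X ^ degree p"
proof -
  have "poly p x = (\<Sum>i\<le>degree p. coeff p i * x ^ i)" by (simp add: poly_altdef)
  also have "\<dots> \<le> (\<Sum>i\<le>degree p. coeff p i * X ^ degree p)"
  proof (rule sum_mono)
    fix i assume "i \<in> {..degree p}"
    then have "i \<le> degree p" by simp
    have "x ^ i \<le> X ^ i" using assms by (simp add: power_mono)
    also have "\<dots> \<le> X ^ degree p" using assms \<open>i \<le> degree p\<close> by (simp add: power_increasing)
    finally show "coeff p i * x ^ i \<le> coeff p i * X ^ degree p" by simp
  qed
  also have "\<dots> = (\<Sum>i\<le>degree p. coeff p i) * X ^ degree p" by (simp add: sum_distrib_right)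
  finally show ?thesis .
qed

lemma sopoly_bound:
  "P \<in> sopoly \<Longrightarrow> \<exists>c d. \<forall>m n. P (\<lambda>k. k + m + 1) n \<le> c * (m + n + 1) ^ d"
proof (induction P rule: sopoly.induct)
  case (const p)
  show ?case
    by (rule exI[of _ "\<Sum>i\<le>degree p. coeff p i"], rule exI[of _ "degree p"])
       (auto intro: poly_nat_bound)
next
  case (add P Q)
  then obtain c1 d1 c2 d2 where h1: "\<forall>m n. P (\<lambda>k. k + m + 1) n \<le> c1 * (m + n + 1) ^ d1"
    and h2: "\<forall>m n. Q (\<lambda>k. k + m + 1) n \<le> c2 * (m + n + 1) ^ d2" by blast
  show ?case
  proof (intro exI allI)
    fix m n :: nat
    let ?X = "m + n + 1"
    have a: "?X ^ d1 \<le> ?X ^ (d1 + d2)" by (rule power_increasing) auto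
    have b: "?X ^ d2 \<le> ?X ^ (d1 + d2)" by (rule power_increasing) auto
    have "P (\<lambda>k. k + m + 1) n + Q (\<lambda>k. k + m + 1) n \<le> c1 * ?X ^ d1 + c2 * ?X ^ d2"
      using h1 h2 by (simp add: add_mono)
    also have "\<dots> \<le> c1 * ?X ^ (d1 + d2) + c2 * ?X ^ (d1 + d2)"
      using a b by (simp add: add_mono)
    also have "\<dots> = (c1 + c2) * ?X ^ (d1 + d2)" by (simp add: algebra_simps)
    finally show "(\<lambda>l n. P l n + Q l n) (\<lambda>k. k + m + 1) n \<le> (c1 + c2) * ?X ^ (d1 + d2)" by simp
  qed
next
  case (mult P Q)
  then obtain c1 d1 c2 d2 where h1: "\<forall>m n. P (\<lambda>k. k + m + 1) n \<le> c1 * (m + n + 1) ^ d1"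
    and h2: "\<forall>m n. Q (\<lambda>k. k + m + 1) n \<le> c2 * (m + n + 1) ^ d2" by blast
  show ?case
  proof (intro exI allI)
    fix m n :: nat
    let ?X = "m + n + 1"
    have "P (\<lambda>k. k + m + 1) n * Q (\<lambda>k. k + m + 1) n \<le> (c1 * ?X ^ d1) * (c2 * ?X ^ d2)"
      using h1 h2 by (simp add: mult_mono)
    also have "\<dots> = (c1 * c2) * ?X ^ (d1 + d2)" by (simp add: algebra_simps power_add)
    finally show "(\<lambda>l n. P l n * Q l n) (\<lambda>k. k + m + 1) n \<le> (c1 * c2) * ?X ^ (d1 + d2)" by simp
  qed
next
  case (app P)
  then obtain c d where h: "\<forall>m n. P (\<lambda>k. k + m + 1) n \<le> c * (m + n + 1) ^ d" by blast
  show ?case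
  proof (intro exI allI)
    fix m n :: nat
    let ?X = "m + n + 1"
    have a: "?X ^ d \<le> ?X ^ (Suc d)" by (rule power_increasing) auto
    have b: "?X \<le> ?X ^ (Suc d)"
      using power_increasing[of 1 "Suc d" ?X] by simp
    have "P (\<lambda>k. k + m + 1) n + m + 1 \<le> c * ?X ^ d + ?X" using h[rule_format, of m n] by simp
    also have "\<dots> \<le> c * ?X ^ Suc d + ?X ^ Suc d" by (rule add_mono[OF mult_le_mono2[OF a] b])
    also have "\<dots> = (c + 1) * ?X ^ Suc d" by (simp add: algebra_simps)
    finally show "(\<lambda>l n. l (P l n)) (\<lambda>k. k + m + 1) n \<le> (c + 1) * ?X ^ Suc d" by simp
  qed
qed

lemma exp_beats_poly: "\<exists>m\<ge>1. c * (m + 1) ^ d + 2 < (2::nat) ^ m"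
proof -
  have "((\<lambda>m::nat. real (c + 2) * (real m + 1) ^ d / 2 ^ m) \<longlongrightarrow> 0) at_top"
    by real_asymp
  then have "eventually (\<lambda>m::nat. real (c + 2) * (real m + 1) ^ d / 2 ^ m < 1) at_top"
    by (rule order_tendstoD) simp
  moreover have "eventually (\<lambda>m::nat. m \<ge> 1) at_top" by (rule eventually_ge_at_top)
  ultimately have "eventually (\<lambda>m::nat. m \<ge> 1 \<and> real (c + 2) * (real m + 1) ^ d / 2 ^ m < 1) at_top"
    by eventually_elim auto
  then obtain N :: nat where "\<forall>m\<ge>N. m \<ge> 1 \<and> real (c + 2) * (real m + 1) ^ d / 2 ^ m < 1"
    by (auto simp: eventually_sequentially)
  then obtain m :: nat where m: "m \<ge> 1" "real (c + 2) * (real m + 1) ^ d / 2 ^ m < 1" by blast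
  then have "real (c + 2) * (real m + 1) ^ d < 2 ^ m" by (simp add: field_simps)
  then have r: "(c + 2) * (m + 1) ^ d < (2::nat) ^ m"
    by (metis (mono_tags) of_nat_1 of_nat_add of_nat_less_iff of_nat_mult of_nat_numeral of_nat_power)
  have X: "1 \<le> (m + 1) ^ d" by simp
  have "(c + 2) * (m + 1) ^ d = c * (m + 1) ^ d + 2 * (m + 1) ^ d" by (simp add: distrib_right)
  then have "c * (m + 1) ^ d + 2 \<le> (c + 2) * (m + 1) ^ d" using X by linarith
  with r m(1) show ?thesis by auto
qed

section \<open>The machine\<close>

definition dM :: "nat \<Rightarrow> bool option list \<Rightarrow> nat \<times> (bool option \<times> move) list" where
  "dM q syms = (if q = 3 then
     (case syms ! 1 of Some True \<Rightarrow> (2, map (\<lambda>s. (s, Stay)) syms)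
      | Some False \<Rightarrow> (1, [(Some True, Stay), (syms ! 1, Stay)])
      | None \<Rightarrow> (1, map (\<lambda>s. (s, Stay)) syms))
   else (2, map (\<lambda>s. (s, Stay)) syms))"

definition M0 :: otm where "M0 = (| ntapes = 2, nstates = 4, delta = dM |)"

lemma wf_M0: "wf_otm M0"
  unfolding wf_otm_def M0_def dM_def by (auto split: option.splits bool.splits)

lemma init_M0: "init_config M0 a = (0, [(tape_of a, 0), (\<lambda>_. None, 0)])"
  unfolding init_config_def M0_def by (simp add: numeral_2_eq_2)

lemma act_keep[simp]: "act (f, h) (f h, Stay) = (f, h)"
  by simp

lemma step0: "step M0 \<phi> (0, [(t0, 0), (t1, 0)]) = (2, [(t0, 0), (t1, 0)])"
  by (simp add: step_def M0_def dM_def)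

lemma stepQ: "step M0 \<phi> (2, [(t0, 0), (t1, 0)]) = (3, [(t0, 0), (tape_of (\<phi> (read_tape t1)), 0)])"
  by (simp add: step_def)

lemma tape_T_upd[simp]: "(tape_of (True # r))(0 := Some True) = tape_of (True # r)"
  by (rule ext) (simp add: tape_of_def)

lemma tape_of_Cons0[simp]: "tape_of (x # r) 0 = Some x"
  by (simp add: tape_of_def)

lemma step3T: "step M0 \<phi> (3, [(t0, 0), (tape_of (True # r), 0)]) = (2, [(t0, 0), (tape_of (True # r), 0)])"
  by (simp add: step_def M0_def dM_def)

lemma step3T':
  assumes "w \<noteq> []" "hd w"
  shows "step M0 \<phi> (3, [(t0, 0), (tape_of w, 0)]) = (2, [(t0, 0), (tape_of w, 0)])"
  using assms step3T by (cases w) auto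

lemma step3N: "step M0 \<phi> (3, [(t0, 0), (tape_of [], 0)]) = (1, [(t0, 0), (tape_of [], 0)])"
  by (simp add: step_def M0_def dM_def tape_of_def)

lemma step3F: "step M0 \<phi> (3, [(t0, 0), (tape_of (False # r), 0)]) =
   (1, [(t0(0 := Some True), 0), (tape_of (False # r), 0)])"
  by (simp add: step_def M0_def dM_def tape_of_def fun_upd_idem)

section \<open>The family of oracles\<close>

definition psi :: "nat \<Rightarrow> strfun" where
  "psi m w = (if w = [] then replicate m True
     else if (\<forall>x\<in>set w. x) \<and> m \<le> length w then replicate (Suc (length w)) True else [])"

definition phi :: "nat \<Rightarrow> nat \<Rightarrow> str \<Rightarrow> bool \<Rightarrow> strfun" where
  "phi m n y b = (psi m)(replicate (m + n) True := (if b then [False] else []),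
                         y := replicate (2 * n + 5) True)"

lemma chain:
  assumes m: "m \<ge> 1" and y: "length y = m" "y \<noteq> replicate m True" and k: "k \<le> n"
  shows "run M0 (phi m n y b) a (2 + 2 * k) =
           (3, [(tape_of a, 0), (tape_of (replicate (m + k) True), 0)])"
  using k
proof (induction k)
  case 0
  have yne: "y \<noteq> []" using m y by auto
  have "phi m n y b [] = replicate m True"
    using m y yne by (simp add: phi_def psi_def)
  moreover have "run M0 (phi m n y b) a (2 + 2 * 0) =
      step M0 (phi m n y b) (step M0 (phi m n y b) (init_config M0 a))"
    by (simp add: run_def numeral_2_eq_2)
  ultimately show ?case
    by (simp add: init_M0 step0 stepQ)
next
  case (Suc k)
  then have IH: "run M0 (phi m n y b) a (2 + 2 * k) =
           (3, [(tape_of a, 0), (tape_of (replicate (m + k) True), 0)])" by simp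
  have kn: "k < n" using Suc.prems by simp
  have ne: "replicate (m + k) True \<noteq> y"
  proof (cases "k = 0")
    case True then show ?thesis using y by auto
  next
    case False
    then have "length (replicate (m + k) True) \<noteq> length y" using y by simp
    then show ?thesis by metis
  qed
  have ne2: "replicate (m + k) True \<noteq> replicate (m + n) True" using kn by simp
  have val: "phi m n y b (replicate (m + k) True) = replicate (m + Suc k) True"
    using ne ne2 m by (simp add: phi_def psi_def)
  have w: "replicate (m + k) True \<noteq> []" "hd (replicate (m + k) True)" using m by auto
  have e: "2 + 2 * Suc k = Suc (Suc (2 + 2 * k))" by simp
  show ?case unfolding e run_Suc IH step3T'[OF w] stepQ read_tape_tape_of val ..
qed

lemma phi_run_end:
  assumes m: "m \<ge> 1" and y: "length y = m" "y \<noteq> replicate m True"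
  shows "run M0 (phi m n y b) a (2 * n + 5) =
     (1, [(if b then (tape_of a)(0 := Some True) else tape_of a, 0),
          (tape_of (if b then [False] else []), 0)])"
proof -
  have ne: "replicate (m + n) True \<noteq> y"
  proof (cases "n = 0")
    case True then show ?thesis using y by auto
  next
    case False
    then have "length (replicate (m + n) True) \<noteq> length y" using y by simp
    then show ?thesis by metis
  qed
  have val: "phi m n y b (replicate (m + n) True) = (if b then [False] else [])"
    using ne by (simp add: phi_def)
  have w: "replicate (m + n) True \<noteq> []" "hd (replicate (m + n) True)" using m by auto
  have e: "2 * n + 5 = Suc (Suc (Suc (2 + 2 * n)))" by simp
  show ?thesis unfolding e run_Suc chain[OF assms order_refl] step3T'[OF w] stepQ read_tape_tape_of val
    by (cases b) (simp_all add: step3F step3N)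
qed

lemma size_phi0: "size_fun \<phi> 0 = length (\<phi> [])"
proof -
  have "{length (\<phi> a) |a. length a \<le> 0} = {length (\<phi> [])}" by auto
  then show ?thesis unfolding size_fun_def by simp
qed

lemma size_ge: "length a \<le> k \<Longrightarrow> length (\<phi> a) \<le> size_fun \<phi> k"
  unfolding size_fun_def
proof (rule Max_ge)
  have "{length (\<phi> a) |a. length a \<le> k} = (\<lambda>a. length (\<phi> a)) ` {a. length a \<le> k}" by auto
  then show "finite {length (\<phi> a) |a. length a \<le> k}" using finite_len by simp
qed auto

lemma size_psi: "size_fun (psi m) k \<le> k + m + 1"
  unfolding size_fun_def
proof (rule Max.boundedI)
  have "{length (psi m a) |a. length a \<le> k} = (\<lambda>a. length (psi m a)) ` {a. length a \<le> k}" by auto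
  then show "finite {length (psi m a) |a. length a \<le> k}" using finite_len by simp
  show "{length (psi m a) |a. length a \<le> k} \<noteq> {}" by (auto intro!: exI[of _ "[]::bool list"])
  show "\<And>x. x \<in> {length (psi m a) |a. length a \<le> k} \<Longrightarrow> x \<le> k + m + 1"
    by (auto simp: psi_def)
qed

definition PP :: "(nat \<Rightarrow> nat) \<Rightarrow> nat \<Rightarrow> nat" where "PP = (\<lambda>l n. l (l 0))"

lemma PP_sopoly: "PP \<in> sopoly"
proof -
  have "(\<lambda>l n. poly (0::nat poly) n) \<in> sopoly" by (rule sopoly.const)
  then have "(\<lambda>l n. l ((\<lambda>l n. poly (0::nat poly) n) l n)) \<in> sopoly" by (rule sopoly.app)
  then have "(\<lambda>l n. l ((\<lambda>l n. l ((\<lambda>l n. poly (0::nat poly) n) l n)) l n)) \<in> sopoly" by (rule sopoly.app)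
  then show ?thesis by (simp add: PP_def)
qed

definition AA :: "strfun set" where
  "AA = {\<phi>. \<forall>a. halts M0 \<phi> a \<and> time M0 \<phi> a \<le> PP (size_fun \<phi>) (length a)}"

lemma phi_in_AA:
  assumes m: "m \<ge> 1" and y: "length y = m" "y \<noteq> replicate m True"
  shows "phi m n y b \<in> AA"
proof -
  let ?p = "phi m n y b"
  have yne: "y \<noteq> []" using m y by auto
  have s0: "size_fun ?p 0 = m"
    unfolding size_phi0 using m y yne by (simp add: phi_def psi_def)
  have "length (?p y) \<le> size_fun ?p m" by (rule size_ge) (simp add: y)
  then have sm: "2 * n + 5 \<le> size_fun ?p m" by (simp add: phi_def)
  { fix a
    have h: "fst (run M0 ?p a (2 * n + 5)) = 1" using phi_run_end[OF assms] by simp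
    then have "halts M0 ?p a" unfolding halts_def by blast
    moreover have "time M0 ?p a \<le> 2 * n + 5" unfolding time_def using h by (rule Least_le)
    ultimately have "halts M0 ?p a \<and> time M0 ?p a \<le> PP (size_fun ?p) (length a)"
      using sm s0 by (simp add: PP_def) }
  then show ?thesis unfolding AA_def by blast
qed

lemma output_from_run:
  assumes "fst (run M \<phi> a k) = 1"
  shows "otm_output M \<phi> a = read_tape (fst (snd (run M \<phi> a k) ! 0))"
proof -
  have t: "time M \<phi> a \<le> k" unfolding time_def using assms by (rule Least_le)
  have "fst (run M \<phi> a (time M \<phi> a)) = 1" unfolding time_def using assms by (rule LeastI)
  then have "run M \<phi> a (time M \<phi> a + (k - time M \<phi> a)) = run M \<phi> a (time M \<phi> a)"
    by (rule run_halted)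
  then have "run M \<phi> a k = run M \<phi> a (time M \<phi> a)" using t by simp
  then show ?thesis unfolding otm_output_def by simp
qed

lemma phi_output:
  assumes m: "m \<ge> 1" and y: "length y = m" "y \<noteq> replicate m True"
  shows "otm_output M0 (phi m n y b) [] = (if b then [True] else [])"
proof -
  have "otm_output M0 (phi m n y b) [] = read_tape (fst (snd (run M0 (phi m n y b) [] (2 * n + 5)) ! 0))"
    by (rule output_from_run) (simp add: phi_run_end[OF assms])
  also have "\<dots> = (if b then [True] else [])"
  proof (cases b)
    case True
    have "(tape_of [])(0 := Some True) = tape_of [True]" by (auto simp: tape_of_def)
    then show ?thesis using True by (simp add: phi_run_end[OF assms])
  next
    case False
    then show ?thesis by (simp add: phi_run_end[OF assms])
  qed
  finally show ?thesis .
qed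

theorem mainTheorem6:
  shows "\<exists>(A :: strfun set) (F :: strfun \<Rightarrow> strfun).
           restricted_polytime A F \<and>
           \<not> (\<exists>G. (\<forall>\<phi>\<in>A. G \<phi> = F \<phi>) \<and> polytime G)"
proof (intro exI conjI)
  show "restricted_polytime AA (otm_output M0)"
    unfolding restricted_polytime_def computes_on_def
    using wf_M0 PP_sopoly by (auto simp: AA_def)
  show "\<not> (\<exists>G. (\<forall>\<phi>\<in>AA. G \<phi> = otm_output M0 \<phi>) \<and> polytime G)"
  proof
    assume "\<exists>G. (\<forall>\<phi>\<in>AA. G \<phi> = otm_output M0 \<phi>) \<and> polytime G"
    then obtain G where agr: "\<forall>\<phi>\<in>AA. G \<phi> = otm_output M0 \<phi>" and pt: "polytime G" by blast
    then obtain MG Q where cmp: "computes_on MG UNIV G" and Qs: "Q \<in> sopoly"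
      and tb: "\<forall>\<phi>. \<forall>a. time MG \<phi> a \<le> Q (size_fun \<phi>) (length a)"
      unfolding polytime_def restricted_polytime_def by blast
    obtain c d where cd: "\<forall>m n. Q (\<lambda>k. k + m + 1) n \<le> c * (m + n + 1) ^ d"
      using sopoly_bound[OF Qs] by blast
    obtain m where m: "m \<ge> 1" "c * (m + 1) ^ d + 2 < (2::nat) ^ m"
      using exp_beats_poly by blast
    define \<psi> where "\<psi> = psi m"
    define T where "T = time MG \<psi> []"
    have "T \<le> Q (size_fun \<psi>) 0" using tb unfolding T_def by (metis list.size(3))
    also have "\<dots> \<le> Q (\<lambda>k. k + m + 1) 0"
      by (rule sopoly_mono[OF Qs]) (use size_psi in \<open>auto simp: \<psi>_def mono_def\<close>)
    also have "\<dots> \<le> c * (m + 1) ^ d" using cd by (metis add_0_right)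
    finally have T2: "T + 2 < 2 ^ m" using m(2) by linarith
    have hl: "halts MG \<psi> []" using cmp unfolding computes_on_def by blast
    have hT: "fst (run MG \<psi> [] T) = 1"
      unfolding T_def time_def using hl unfolding halts_def by (rule LeastI_ex)
    define qs where "qs = (\<lambda>i. read_tape (fst (snd (run MG \<psi> [] i) ! 1)))"
    define S where "S = qs ` {i. i < T \<and> fst (run MG \<psi> [] i) = 2}"
    have fS: "finite S" unfolding S_def by simp
    have cS: "card S \<le> T"
    proof -
      have "card S \<le> card {i. i < T \<and> fst (run MG \<psi> [] i) = 2}"
        unfolding S_def by (rule card_image_le) simp
      also have "\<dots> \<le> card {..<T}" by (rule card_mono) (simp, blast)
      finally show ?thesis by simp
    qed
    obtain n where n: "replicate (m + n) True \<notin> S"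
    proof -
      let ?R = "(\<lambda>n. replicate (m + n) True) ` {..T}"
      have "inj_on (\<lambda>n. replicate (m + n) True) {..T}"
        by (rule inj_onI) (metis add_left_cancel length_replicate)
      then have "card ?R = Suc T" by (simp add: card_image)
      have "\<not> ?R \<subseteq> S"
      proof
        assume "?R \<subseteq> S"
        then have "card ?R \<le> card S" by (rule card_mono[OF fS])
        then show False using \<open>card ?R = Suc T\<close> cS by linarith
      qed
      then show ?thesis using that by blast
    qed
    obtain y where y: "length y = m" "y \<noteq> replicate m True" "y \<notin> S"
    proof -
      let ?Y = "{w :: bool list. set w \<subseteq> UNIV \<and> length w = m}"
      have cY: "card ?Y = 2 ^ m" using card_lists_length_eq[of "UNIV::bool set" m] by simp
      have "\<not> ?Y \<subseteq> insert (replicate m True) S"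
      proof
        assume "?Y \<subseteq> insert (replicate m True) S"
        then have "card ?Y \<le> card (insert (replicate m True) S)"
          using fS by (intro card_mono) simp_all
        also have "\<dots> \<le> Suc (card S)" by (simp add: card_insert_if fS)
        finally show False using cY cS T2 by linarith
      qed
      then show ?thesis using that by blast
    qed
    have agreeS: "phi m n y b w = \<psi> w" if "w \<in> S" for b w
    proof -
      have "w \<noteq> replicate (m + n) True" "w \<noteq> y" using n y(3) that by auto
      then show ?thesis by (simp add: phi_def \<psi>_def)
    qed
    have out: "otm_output MG (phi m n y b) [] = otm_output MG \<psi> []" for b
    proof -
      have runs: "run MG (phi m n y b) [] i = run MG \<psi> [] i" if "i \<le> T" for i
      proof (rule run_agree, intro allI impI)
        fix j assume "j < i" "fst (run MG \<psi> [] j) = 2"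
        then have "j < T" "fst (run MG \<psi> [] j) = 2" using that by simp_all
        then have "qs j \<in> S" unfolding S_def by (intro imageI) simp
        then have "phi m n y b (qs j) = \<psi> (qs j)" by (rule agreeS)
        then show "phi m n y b (read_tape (fst (snd (run MG \<psi> [] j) ! 1))) =
                   \<psi> (read_tape (fst (snd (run MG \<psi> [] j) ! 1)))"
          by (simp add: qs_def)
      qed
      have "fst (run MG (phi m n y b) [] T) = 1" using runs[of T] hT by simp
      then have "otm_output MG (phi m n y b) [] = read_tape (fst (snd (run MG (phi m n y b) [] T) ! 0))"
        by (rule output_from_run)
      also have "\<dots> = read_tape (fst (snd (run MG \<psi> [] T) ! 0))" using runs[of T] by simp
      also have "\<dots> = otm_output MG \<psi> []" using hT by (rule output_from_run[symmetric])
      finally show ?thesis .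
    qed
    have Gout: "G (phi m n y b) [] = (if b then [True] else [])" for b
    proof -
      have "phi m n y b \<in> AA" by (rule phi_in_AA) (use m y in auto)
      then have "G (phi m n y b) = otm_output M0 (phi m n y b)" using agr by blast
      then show ?thesis using phi_output[of m y n b] m y by simp
    qed
    have "G (phi m n y b) [] = otm_output MG (phi m n y b) []" for b
      using cmp unfolding computes_on_def by (metis UNIV_I)
    then have "G (phi m n y True) [] = G (phi m n y False) []" using out by simp
    then show False using Gout[of True] Gout[of False] by simp
  qed
qed

end
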